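(* Let $W$ and $V$ be binary-input channels such that $V$ is less noisy than $W$. Then for every $n\ge1$ and every $\mathbf{s}\in\{-,+\}^n$, $V^{\mathbf{s}}$ is less noisy than $W^{\mathbf{s}}$; in particular $I(W^{\mathbf{s}})\le I(V^{\mathbf{s}})$.
   Context: A binary-input channel $W\colon\{0,1\}\to\mathcal{Y}$ is a family of transition probabilities $W(y\mid x)$ on a discrete output alphabet; its symmetric capacity $I(W)$ is the mutual information (in bits) between a uniform input in $\{0,1\}$ and the output. A channel $V$ is less noisy than a channel $W$ with the same input alphabet if $I(T;Y)\le I(T;Z)$ for every joint distribution of the form $p(t,x,y,z)=p(x,t)W(y\mid x)V(z\mid x)$. For a binary-input channel $W$, define $W^-(y_1,y_2\mid u_1)=\sum_{u_2\in\{0,1\}}\tfrac12 W(y_1\mid u_1+u_2)W(y_2\mid u_2)$ and $W^+(y_1,y_2,u_1\mid u_2)=\tfrac12 W(y_1\mid u_1+u_2)W(y_2\mid u_2)$ (addition mod 2), and recursively $W^{s_1\cdots s_n}=(W^{s_1\cdots s_{n-1}})^{s_n}$ for $\mathbf{s}=(s_1,\dots,s_n)\in\{-,+\}^n$. *)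

theory Defs
  imports Main "HOL-Library.Log_Nat" Complex_Main
begin

text \<open>Output alphabet closed under the polar transforms: base outputs, the
  output pair (y1,y2) of the minus channel, and the output triple (y1,y2,u1) of the
  plus channel. Bits in {0,1} are represented by bool (False = 0, True = 1),
  addition mod 2 is inequality of booleans.\<close>
datatype 'y outp = Base 'y | MinusOut "'y outp" "'y outp" | PlusOut "'y outp" "'y outp" bool

datatype sign = Minus | Plus

definition channel :: "(bool \<Rightarrow> 'y \<Rightarrow> real) \<Rightarrow> bool" where
  "channel W \<longleftrightarrow> (\<forall>x y. 0 \<le> W x y) \<and> finite {y. \<exists>x. W x y \<noteq> 0} \<and>
     (\<forall>x. (\<Sum>y\<in>{y. \<exists>x. W x y \<noteq> 0}. W x y) = 1)"

definition lift :: "(bool \<Rightarrow> 'y \<Rightarrow> real) \<Rightarrow> bool \<Rightarrow> 'y outp \<Rightarrow> real" where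
  "lift W x y = (case y of Base b \<Rightarrow> W x b | _ \<Rightarrow> 0)"

definition minus_ch :: "(bool \<Rightarrow> 'y outp \<Rightarrow> real) \<Rightarrow> bool \<Rightarrow> 'y outp \<Rightarrow> real" where
  "minus_ch W u1 y = (case y of MinusOut y1 y2 \<Rightarrow>
      (\<Sum>u2\<in>(UNIV::bool set). 1/2 * W (u1 \<noteq> u2) y1 * W u2 y2) | _ \<Rightarrow> 0)"

definition plus_ch :: "(bool \<Rightarrow> 'y outp \<Rightarrow> real) \<Rightarrow> bool \<Rightarrow> 'y outp \<Rightarrow> real" where
  "plus_ch W u2 y = (case y of PlusOut y1 y2 u1 \<Rightarrow> 1/2 * W (u1 \<noteq> u2) y1 * W u2 y2 | _ \<Rightarrow> 0)"

fun transform :: "sign \<Rightarrow> (bool \<Rightarrow> 'y outp \<Rightarrow> real) \<Rightarrow> bool \<Rightarrow> 'y outp \<Rightarrow> real" where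
  "transform Minus W = minus_ch W"
| "transform Plus W = plus_ch W"

text \<open>W^{s1...sn} = (W^{s1...s(n-1)})^{sn}: s1 is applied first.\<close>
definition polar :: "sign list \<Rightarrow> (bool \<Rightarrow> 'y outp \<Rightarrow> real) \<Rightarrow> bool \<Rightarrow> 'y outp \<Rightarrow> real" where
  "polar s W = fold transform s W"

definition mutual_info :: "('a \<Rightarrow> 'b \<Rightarrow> real) \<Rightarrow> real" where
  "mutual_info q = (let A = {a. \<exists>b. q a b \<noteq> 0}; B = {b. \<exists>a. q a b \<noteq> 0};
      pa = (\<lambda>a. \<Sum>b\<in>B. q a b); pb = (\<lambda>b. \<Sum>a\<in>A. q a b)
    in \<Sum>a\<in>A. \<Sum>b\<in>B. (if q a b = 0 then 0 else q a b * log 2 (q a b / (pa a * pb b))))"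

definition sym_capacity :: "(bool \<Rightarrow> 'y \<Rightarrow> real) \<Rightarrow> real" where
  "sym_capacity W = mutual_info (\<lambda>x y. 1/2 * W x y)"

text \<open>Joint distributions p(t,x) of an auxiliary variable T (finite alphabet,
  encoded in nat) and the channel input X.\<close>
definition joint_pmf :: "(nat \<Rightarrow> bool \<Rightarrow> real) \<Rightarrow> bool" where
  "joint_pmf p \<longleftrightarrow> (\<forall>t x. 0 \<le> p t x) \<and> finite {t. \<exists>x. p t x \<noteq> 0} \<and>
     (\<Sum>t\<in>{t. \<exists>x. p t x \<noteq> 0}. \<Sum>x\<in>(UNIV::bool set). p t x) = 1"

definition joint_out :: "(nat \<Rightarrow> bool \<Rightarrow> real) \<Rightarrow> (bool \<Rightarrow> 'y \<Rightarrow> real) \<Rightarrow> nat \<Rightarrow> 'y \<Rightarrow> real" where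
  "joint_out p W t y = (\<Sum>x\<in>(UNIV::bool set). p t x * W x y)"

definition less_noisy :: "(bool \<Rightarrow> 'z \<Rightarrow> real) \<Rightarrow> (bool \<Rightarrow> 'y \<Rightarrow> real) \<Rightarrow> bool" where
  "less_noisy V W \<longleftrightarrow> (\<forall>p. joint_pmf p \<longrightarrow>
      mutual_info (joint_out p W) \<le> mutual_info (joint_out p V))"

end

theory Submission
  imports Defs
begin


lemma sum_bool: "(\<Sum>x\<in>(UNIV::bool set). f x) = f False + f True"
  by (simp add: UNIV_bool)

definition MIS :: "'a set \<Rightarrow> 'b set \<Rightarrow> ('a \<Rightarrow> 'b \<Rightarrow> real) \<Rightarrow> real" where
  "MIS S T q = (\<Sum>a\<in>S. \<Sum>b\<in>T. q a b * log 2 (q a b / ((\<Sum>b'\<in>T. q a b') * (\<Sum>a'\<in>S. q a' b))))"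

lemma MIS_cong:
  assumes "\<And>a b. a \<in> S \<Longrightarrow> b \<in> T \<Longrightarrow> q a b = q' a b"
  shows "MIS S T q = MIS S T q'"
  unfolding MIS_def using assms by (intro sum.cong refl) auto

lemma MIS_eq:
  fixes q :: "'a \<Rightarrow> 'b \<Rightarrow> real"
  assumes S: "finite S" and T: "finite T" and supp: "\<And>a b. q a b \<noteq> 0 \<Longrightarrow> a \<in> S \<and> b \<in> T"
  shows "mutual_info q = MIS S T q"
proof -
  define A where "A = {a. \<exists>b. q a b \<noteq> 0}"
  define B where "B = {b. \<exists>a. q a b \<noteq> 0}"
  have AS: "A \<subseteq> S" and BT: "B \<subseteq> T" using supp by (auto simp: A_def B_def)
  have pa: "(\<Sum>b\<in>B. q a b) = (\<Sum>b\<in>T. q a b)" for a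
    by (rule sum.mono_neutral_left[OF T BT]) (auto simp: B_def)
  have pb: "(\<Sum>a\<in>A. q a b) = (\<Sum>a\<in>S. q a b)" for b
    by (rule sum.mono_neutral_left[OF S AS]) (auto simp: A_def)
  have "mutual_info q = (\<Sum>a\<in>A. \<Sum>b\<in>B. q a b * log 2 (q a b / ((\<Sum>b'\<in>T. q a b') * (\<Sum>a'\<in>S. q a' b))))"
    unfolding mutual_info_def Let_def A_def[symmetric] B_def[symmetric] pa pb
    by (intro sum.cong refl) auto
  also have "\<dots> = (\<Sum>a\<in>S. \<Sum>b\<in>B. q a b * log 2 (q a b / ((\<Sum>b'\<in>T. q a b') * (\<Sum>a'\<in>S. q a' b))))"
    by (rule sum.mono_neutral_left[OF S AS]) (auto simp: A_def intro!: sum.neutral)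
  also have "\<dots> = MIS S T q"
    unfolding MIS_def
    by (intro sum.cong refl sum.mono_neutral_left[OF T BT]) (auto simp: B_def)
  finally show ?thesis .
qed

lemma mi_relabel:
  fixes q :: "'a \<Rightarrow> 'b \<Rightarrow> real" and q' :: "'c \<Rightarrow> 'd \<Rightarrow> real"
  assumes S: "finite S" and T: "finite T" and supp: "\<And>a b. q a b \<noteq> 0 \<Longrightarrow> a \<in> S \<and> b \<in> T"
    and f: "inj_on f S" and g: "inj_on g T"
    and supp': "\<And>a b. q' a b \<noteq> 0 \<Longrightarrow> a \<in> f ` S \<and> b \<in> g ` T"
    and val: "\<And>a b. a \<in> S \<Longrightarrow> b \<in> T \<Longrightarrow> q' (f a) (g b) = q a b"
  shows "mutual_info q' = mutual_info q"
proof -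
  have "mutual_info q' = MIS (f ` S) (g ` T) q'"
    using S T supp' by (intro MIS_eq) auto
  also have "\<dots> = MIS S T q"
    unfolding MIS_def using f g
    by (simp add: sum.reindex val)
  also have "\<dots> = mutual_info q" using MIS_eq[OF S T supp] by simp
  finally show ?thesis .
qed



lemma log_split:
  fixes x q1 qT qA qAB :: real
  assumes "x > 0" "q1 > 0" "qT > 0" "qA > 0" "qAB > 0"
  shows "x * log 2 (x/(qT*qAB)) = x * log 2 (q1/(qT*qA)) + qA * ((x/qA) * log 2 ((x/qA)/((q1/qA)*(qAB/qA))))"
proof -
  have e: "x/(qT*qAB) = (q1/(qT*qA)) * ((x/qA)/((q1/qA)*(qAB/qA)))"
    using assms by (simp add: field_simps)
  have "log 2 (x/(qT*qAB)) = log 2 (q1/(qT*qA)) + log 2 ((x/qA)/((q1/qA)*(qAB/qA)))"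
    unfolding e using assms by (intro log_mult_pos) auto
  then show ?thesis using assms by (simp add: field_simps)
qed

lemma chain:
  fixes q :: "'c \<Rightarrow> ('a \<times> 'b) \<Rightarrow> real"
  assumes S: "finite S" and A: "finite A" and B: "finite B"
    and nn: "\<And>t y. 0 \<le> q t y"
    and supp: "\<And>t y. q t y \<noteq> 0 \<Longrightarrow> t \<in> S \<and> y \<in> A \<times> B"
  shows "MIS S (A \<times> B) q = MIS S A (\<lambda>t a. \<Sum>b\<in>B. q t (a,b)) +
     (\<Sum>a\<in>A. (\<Sum>t\<in>S. \<Sum>b\<in>B. q t (a,b)) * MIS S B (\<lambda>t b. q t (a,b) / (\<Sum>t\<in>S. \<Sum>b\<in>B. q t (a,b))))"
proof -
  define q1 where "q1 = (\<lambda>t a. \<Sum>b\<in>B. q t (a,b))"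
  define QA where "QA = (\<lambda>a. \<Sum>t\<in>S. q1 t a)"
  define qT where "qT = (\<lambda>t. \<Sum>a\<in>A. q1 t a)"
  define qAB where "qAB = (\<lambda>a b. \<Sum>t\<in>S. q t (a,b))"
  have QA': "(\<Sum>t\<in>S. \<Sum>b\<in>B. q t (a,b)) = QA a" for a by (simp add: QA_def q1_def)
  have qT': "(\<Sum>y\<in>A\<times>B. q t y) = qT t" for t
    by (simp add: qT_def q1_def sum.cartesian_product)
  have L: "MIS S (A \<times> B) q = (\<Sum>t\<in>S. \<Sum>a\<in>A. \<Sum>b\<in>B. q t (a,b) * log 2 (q t (a,b) / (qT t * qAB a b)))"
    unfolding MIS_def qT' by (simp add: sum.cartesian_product qAB_def)
  have R1a: "MIS S A q1 = (\<Sum>t\<in>S. \<Sum>a\<in>A. q1 t a * log 2 (q1 t a / (qT t * QA a)))"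
    unfolding MIS_def by (simp add: qT_def QA_def)
  have R1: "MIS S A q1 = (\<Sum>t\<in>S. \<Sum>a\<in>A. \<Sum>b\<in>B. q t (a,b) * log 2 (q1 t a / (qT t * QA a)))"
    unfolding R1a by (intro sum.cong refl) (subst (1) q1_def, simp add: sum_distrib_right)
  have R2: "QA a * MIS S B (\<lambda>t b. q t (a,b) / QA a) =
     (\<Sum>t\<in>S. \<Sum>b\<in>B. QA a * ((q t (a,b) / QA a) * log 2 ((q t (a,b) / QA a) / ((q1 t a / QA a) * (qAB a b / QA a)))))" for a
  proof -
    have m1: "(\<Sum>b'\<in>B. q t (a,b') / QA a) = q1 t a / QA a" for t
      by (simp add: q1_def sum_divide_distrib)
    have m2: "(\<Sum>t'\<in>S. q t' (a,b) / QA a) = qAB a b / QA a" for b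
      by (simp add: qAB_def sum_divide_distrib)
    show ?thesis unfolding MIS_def m1 m2 by (simp add: sum_distrib_left)
  qed
  have R2': "(\<Sum>a\<in>A. QA a * MIS S B (\<lambda>t b. q t (a,b) / QA a)) =
     (\<Sum>t\<in>S. \<Sum>a\<in>A. \<Sum>b\<in>B. QA a * ((q t (a,b) / QA a) * log 2 ((q t (a,b) / QA a) / ((q1 t a / QA a) * (qAB a b / QA a)))))"
    unfolding R2 by (rule sum.swap)
  have trm: "q t (a,b) * log 2 (q t (a,b) / (qT t * qAB a b)) =
     q t (a,b) * log 2 (q1 t a / (qT t * QA a)) +
     QA a * ((q t (a,b) / QA a) * log 2 ((q t (a,b) / QA a) / ((q1 t a / QA a) * (qAB a b / QA a))))"
    if t: "t \<in> S" and a: "a \<in> A" and b: "b \<in> B" for t a b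
  proof (cases "q t (a,b) = 0")
    case True then show ?thesis by simp
  next
    case False
    have x: "q t (a,b) > 0" using False nn[of t "(a,b)"] by simp
    have h1: "q t (a,b) \<le> q1 t a" unfolding q1_def
      using B b nn by (intro member_le_sum) auto
    have h2: "q1 t a \<le> qT t" unfolding qT_def
      using A a nn by (intro member_le_sum) (auto simp: q1_def intro: sum_nonneg)
    have h3: "q1 t a \<le> QA a" unfolding QA_def
      using S t nn by (intro member_le_sum) (auto simp: q1_def intro: sum_nonneg)
    have h4: "q t (a,b) \<le> qAB a b" unfolding qAB_def
      using S t nn by (intro member_le_sum) auto
    show ?thesis
      by (rule log_split) (use x h1 h2 h3 h4 in auto)
  qed
  show ?thesis
    unfolding QA' q1_def[symmetric] L R1 R2' sum.distrib[symmetric]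
    by (intro sum.cong refl trm) auto
qed



lemma chain_le:
  fixes q :: "'c \<Rightarrow> ('a \<times> 'b) \<Rightarrow> real" and q' :: "'c \<Rightarrow> ('a \<times> 'd) \<Rightarrow> real"
  assumes S: "finite S" and A: "finite A" and B: "finite B" and B': "finite B'"
    and nn: "\<And>t y. 0 \<le> q t y" and nn': "\<And>t y. 0 \<le> q' t y"
    and supp: "\<And>t y. q t y \<noteq> 0 \<Longrightarrow> t \<in> S \<and> y \<in> A \<times> B"
    and supp': "\<And>t y. q' t y \<noteq> 0 \<Longrightarrow> t \<in> S \<and> y \<in> A \<times> B'"
    and marg: "\<And>t a. t \<in> S \<Longrightarrow> a \<in> A \<Longrightarrow> (\<Sum>b\<in>B. q t (a,b)) = (\<Sum>b\<in>B'. q' t (a,b))"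
    and cond: "\<And>a. a \<in> A \<Longrightarrow> (\<Sum>t\<in>S. \<Sum>b\<in>B. q t (a,b)) > 0 \<Longrightarrow>
       mutual_info (\<lambda>t b. q t (a,b) / (\<Sum>t\<in>S. \<Sum>b\<in>B. q t (a,b))) \<le>
       mutual_info (\<lambda>t b. q' t (a,b) / (\<Sum>t\<in>S. \<Sum>b\<in>B. q t (a,b)))"
  shows "mutual_info q \<le> mutual_info q'"
proof -
  define QA where "QA = (\<lambda>a. \<Sum>t\<in>S. \<Sum>b\<in>B. q t (a,b))"
  have QA': "(\<Sum>t\<in>S. \<Sum>b\<in>B'. q' t (a,b)) = QA a" if "a \<in> A" for a
    unfolding QA_def using marg that by (intro sum.cong) auto
  have QAnn: "QA a \<ge> 0" for a unfolding QA_def using nn by (intro sum_nonneg) auto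
  have e1: "mutual_info q = MIS S A (\<lambda>t a. \<Sum>b\<in>B. q t (a,b)) +
     (\<Sum>a\<in>A. QA a * MIS S B (\<lambda>t b. q t (a,b) / QA a))"
    using MIS_eq[OF S finite_cartesian_product[OF A B] supp] chain[OF S A B nn supp]
    unfolding QA_def by simp
  have e2: "mutual_info q' = MIS S A (\<lambda>t a. \<Sum>b\<in>B'. q' t (a,b)) +
     (\<Sum>a\<in>A. (\<Sum>t\<in>S. \<Sum>b\<in>B'. q' t (a,b)) * MIS S B' (\<lambda>t b. q' t (a,b) / (\<Sum>t\<in>S. \<Sum>b\<in>B'. q' t (a,b))))"
    using MIS_eq[OF S finite_cartesian_product[OF A B'] supp'] chain[OF S A B' nn' supp']
    by simp
  also have "\<dots> = MIS S A (\<lambda>t a. \<Sum>b\<in>B. q t (a,b)) +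
     (\<Sum>a\<in>A. QA a * MIS S B' (\<lambda>t b. q' t (a,b) / QA a))"
    using marg QA' by (intro arg_cong2[where f="(+)"] MIS_cong sum.cong) auto
  finally have e2: "mutual_info q' = \<dots>" .
  have "(\<Sum>a\<in>A. QA a * MIS S B (\<lambda>t b. q t (a,b) / QA a)) \<le>
        (\<Sum>a\<in>A. QA a * MIS S B' (\<lambda>t b. q' t (a,b) / QA a))"
  proof (intro sum_mono)
    fix a assume a: "a \<in> A"
    show "QA a * MIS S B (\<lambda>t b. q t (a,b) / QA a) \<le> QA a * MIS S B' (\<lambda>t b. q' t (a,b) / QA a)"
    proof (cases "QA a = 0")
      case True then show ?thesis by simp
    next
      case False
      then have pos: "QA a > 0" using QAnn[of a] by simp
      have "MIS S B (\<lambda>t b. q t (a,b) / QA a) = mutual_info (\<lambda>t b. q t (a,b) / QA a)"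
        using supp S B by (intro MIS_eq[symmetric]) auto
      also have "\<dots> \<le> mutual_info (\<lambda>t b. q' t (a,b) / QA a)"
        using cond[OF a] pos unfolding QA_def by simp
      also have "\<dots> = MIS S B' (\<lambda>t b. q' t (a,b) / QA a)"
        using supp' S B' by (intro MIS_eq) auto
      finally show ?thesis using pos by (intro mult_left_mono) auto
    qed
  qed
  then show ?thesis unfolding e1 e2 by simp
qed



definition suppW :: "('x \<Rightarrow> 'y \<Rightarrow> real) \<Rightarrow> 'y set" where
  "suppW W = {y. \<exists>x. W x y \<noteq> 0}"

definition chanG :: "('x \<Rightarrow> 'y \<Rightarrow> real) \<Rightarrow> bool" where
  "chanG W \<longleftrightarrow> (\<forall>x y. 0 \<le> W x y) \<and> finite (suppW W) \<and> (\<forall>x. (\<Sum>y\<in>suppW W. W x y) = 1)"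

definition suppT :: "('t \<Rightarrow> 'x \<Rightarrow> real) \<Rightarrow> 't set" where
  "suppT P = {t. \<exists>x. P t x \<noteq> 0}"

definition pmfG :: "('t \<Rightarrow> 'x::finite \<Rightarrow> real) \<Rightarrow> bool" where
  "pmfG P \<longleftrightarrow> (\<forall>t x. 0 \<le> P t x) \<and> finite (suppT P) \<and> (\<Sum>t\<in>suppT P. \<Sum>x\<in>UNIV. P t x) = 1"

definition jointG :: "('t \<Rightarrow> 'x::finite \<Rightarrow> real) \<Rightarrow> ('x \<Rightarrow> 'y \<Rightarrow> real) \<Rightarrow> 't \<Rightarrow> 'y \<Rightarrow> real" where
  "jointG P W t y = (\<Sum>x\<in>UNIV. P t x * W x y)"

definition lnG :: "('x::finite \<Rightarrow> 'z \<Rightarrow> real) \<Rightarrow> ('x \<Rightarrow> 'y \<Rightarrow> real) \<Rightarrow> bool" where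
  "lnG V W \<longleftrightarrow> (\<forall>P::nat \<Rightarrow> 'x \<Rightarrow> real. pmfG P \<longrightarrow> mutual_info (jointG P W) \<le> mutual_info (jointG P V))"

definition prodW :: "('x1 \<Rightarrow> 'y1 \<Rightarrow> real) \<Rightarrow> ('x2 \<Rightarrow> 'y2 \<Rightarrow> real) \<Rightarrow> ('x1 \<times> 'x2) \<Rightarrow> ('y1 \<times> 'y2) \<Rightarrow> real" where
  "prodW W1 W2 x y = W1 (fst x) (fst y) * W2 (snd x) (snd y)"

lemma less_noisy_lnG: "less_noisy V W = lnG V W"
  unfolding less_noisy_def lnG_def joint_pmf_def pmfG_def joint_out_def jointG_def suppT_def by (rule refl)

lemma channel_chanG: "channel W = chanG W"
  unfolding channel_def chanG_def suppW_def by (rule refl)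

lemma chanG_nn: "chanG W \<Longrightarrow> 0 \<le> W x y"
  unfolding chanG_def by auto

lemma chanG_fin: "chanG W \<Longrightarrow> finite (suppW W)"
  unfolding chanG_def by auto

lemma chanG_sum:
  assumes "chanG W" "finite Y" "\<And>x y. W x y \<noteq> 0 \<Longrightarrow> y \<in> Y"
  shows "(\<Sum>y\<in>Y. W x y) = 1"
proof -
  have "suppW W \<subseteq> Y" using assms(3) by (auto simp: suppW_def)
  then have "(\<Sum>y\<in>suppW W. W x y) = (\<Sum>y\<in>Y. W x y)"
    using assms(2) by (intro sum.mono_neutral_left) (auto simp: suppW_def)
  then show ?thesis using assms(1) unfolding chanG_def by simp
qed

lemma chanG_sum': "chanG W \<Longrightarrow> (\<Sum>y\<in>suppW W. W x y) = 1"
  unfolding chanG_def by blast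

lemma chanG_intro:
  assumes "\<And>x y. 0 \<le> W x y" "finite Y" "\<And>x y. W x y \<noteq> 0 \<Longrightarrow> y \<in> Y" "\<And>x. (\<Sum>y\<in>Y. W x y) = 1"
  shows "chanG W"
proof -
  have sub: "suppW W \<subseteq> Y" using assms(3) by (auto simp: suppW_def)
  then have "(\<Sum>y\<in>suppW W. W x y) = (\<Sum>y\<in>Y. W x y)" for x
    using assms(2) by (intro sum.mono_neutral_left) (auto simp: suppW_def)
  then show ?thesis unfolding chanG_def using assms sub finite_subset by auto
qed

lemma in_suppW: "W x y \<noteq> 0 \<Longrightarrow> y \<in> suppW W"
  unfolding suppW_def by auto

lemma pmfG_nn: "pmfG P \<Longrightarrow> 0 \<le> P t x"
  unfolding pmfG_def by auto

lemma pmfG_fin: "pmfG P \<Longrightarrow> finite (suppT P)"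
  unfolding pmfG_def by auto

lemma in_suppT: "P t x \<noteq> 0 \<Longrightarrow> t \<in> suppT P"
  unfolding suppT_def by auto

lemma pmfG_sum:
  assumes "pmfG P" "finite S" "\<And>t x. P t x \<noteq> 0 \<Longrightarrow> t \<in> S"
  shows "(\<Sum>t\<in>S. \<Sum>x\<in>UNIV. P t x) = 1"
proof -
  have "suppT P \<subseteq> S" using assms(3) by (auto simp: suppT_def)
  then have "(\<Sum>t\<in>suppT P. \<Sum>x\<in>UNIV. P t x) = (\<Sum>t\<in>S. \<Sum>x\<in>UNIV. P t x)"
    using assms(2) by (intro sum.mono_neutral_left) (auto simp: suppT_def)
  then show ?thesis using assms(1) unfolding pmfG_def by simp
qed

lemma pmfG_intro:
  assumes "\<And>t x. 0 \<le> P t x" "finite S" "\<And>t x. P t x \<noteq> 0 \<Longrightarrow> t \<in> S" "(\<Sum>t\<in>S. \<Sum>x\<in>UNIV. P t x) = 1"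
  shows "pmfG P"
proof -
  have sub: "suppT P \<subseteq> S" using assms(3) by (auto simp: suppT_def)
  then have "(\<Sum>t\<in>suppT P. \<Sum>x\<in>UNIV. P t x) = (\<Sum>t\<in>S. \<Sum>x\<in>UNIV. P t x)"
    using assms(2) by (intro sum.mono_neutral_left) (auto simp: suppT_def)
  then show ?thesis unfolding pmfG_def using assms sub finite_subset by auto
qed

lemma jointG_nn: "pmfG P \<Longrightarrow> chanG W \<Longrightarrow> 0 \<le> jointG P W t y"
  unfolding jointG_def by (intro sum_nonneg mult_nonneg_nonneg pmfG_nn chanG_nn)

lemma jointG_supp: "jointG P W t y \<noteq> 0 \<Longrightarrow> t \<in> suppT P \<and> y \<in> suppW W"
proof -
  assume "jointG P W t y \<noteq> 0"
  then obtain x where "P t x * W x y \<noteq> 0" unfolding jointG_def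
    using sum.not_neutral_contains_not_neutral by blast
  then have "P t x \<noteq> 0" "W x y \<noteq> 0" by auto
  then show ?thesis using in_suppT in_suppW by metis
qed

lemma chanG_prodW:
  assumes "chanG W1" "chanG W2" shows "chanG (prodW W1 W2)"
proof (rule chanG_intro[where Y="suppW W1 \<times> suppW W2"])
  show "0 \<le> prodW W1 W2 x y" for x y unfolding prodW_def using assms by (simp add: chanG_nn)
  show "finite (suppW W1 \<times> suppW W2)" using chanG_fin[OF assms(1)] chanG_fin[OF assms(2)] by simp
  show "prodW W1 W2 x y \<noteq> 0 \<Longrightarrow> y \<in> suppW W1 \<times> suppW W2" for x y
    unfolding prodW_def by (cases y) (auto intro: in_suppW)
  show "(\<Sum>y\<in>suppW W1 \<times> suppW W2. prodW W1 W2 x y) = 1" for x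
  proof -
    have "(\<Sum>y\<in>suppW W1 \<times> suppW W2. prodW W1 W2 x y) = (\<Sum>a\<in>suppW W1. \<Sum>b\<in>suppW W2. W1 (fst x) a * W2 (snd x) b)"
      unfolding prodW_def sum.cartesian_product by (simp add: case_prod_beta)
    also have "\<dots> = (\<Sum>a\<in>suppW W1. W1 (fst x) a) * (\<Sum>b\<in>suppW W2. W2 (snd x) b)"
      by (simp add: sum_product)
    also have "\<dots> = 1" using chanG_sum'[OF assms(1)] chanG_sum'[OF assms(2)] by simp
    finally show ?thesis .
  qed
qed



lemma sum_UNIV_prod: "(\<Sum>x\<in>(UNIV::('a::finite \<times> 'b::finite) set). f x) = (\<Sum>x1\<in>UNIV. \<Sum>x2\<in>UNIV. f (x1,x2))"
  unfolding UNIV_Times_UNIV[symmetric] sum.cartesian_product by (simp add: case_prod_beta)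

lemma sum_UNIV_prod': "(\<Sum>x\<in>(UNIV::('a::finite \<times> 'b::finite) set). f x) = (\<Sum>x2\<in>UNIV. \<Sum>x1\<in>UNIV. f (x1,x2))"
  unfolding sum_UNIV_prod by (rule sum.swap)

lemma jointG_prod_supp:
  "jointG P (prodW W1 W2) t y \<noteq> 0 \<Longrightarrow> t \<in> suppT P \<and> y \<in> suppW W1 \<times> suppW W2"
proof -
  assume "jointG P (prodW W1 W2) t y \<noteq> 0"
  then obtain x where "P t x * prodW W1 W2 x y \<noteq> 0" unfolding jointG_def
    using sum.not_neutral_contains_not_neutral by blast
  then have "P t x \<noteq> 0" "W1 (fst x) (fst y) \<noteq> 0" "W2 (snd x) (snd y) \<noteq> 0"
    unfolding prodW_def by auto
  then show ?thesis using in_suppT in_suppW by (metis mem_Times_iff)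
qed

lemma marg_prod:
  assumes "chanG W2"
  shows "(\<Sum>b\<in>suppW W2. jointG P (prodW W1 W2) t (a,b)) = (\<Sum>x\<in>UNIV. P t x * W1 (fst x) a)"
proof -
  have "(\<Sum>b\<in>suppW W2. jointG P (prodW W1 W2) t (a,b)) =
        (\<Sum>x\<in>UNIV. \<Sum>b\<in>suppW W2. P t x * W1 (fst x) a * W2 (snd x) b)"
    unfolding jointG_def prodW_def by (subst sum.swap) (simp add: mult.assoc)
  also have "\<dots> = (\<Sum>x\<in>UNIV. P t x * W1 (fst x) a * (\<Sum>b\<in>suppW W2. W2 (snd x) b))"
    by (simp add: sum_distrib_left)
  also have "\<dots> = (\<Sum>x\<in>UNIV. P t x * W1 (fst x) a)"
    using chanG_sum'[OF assms] by simp
  finally show ?thesis .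
qed

lemma cond_eq:
  "jointG P (prodW W1 W2) t (a,b) / c = jointG (\<lambda>t x2. (\<Sum>x1\<in>UNIV. P t (x1,x2) * W1 x1 a) / c) W2 t b"
proof -
  have "jointG P (prodW W1 W2) t (a,b) / c = (\<Sum>x2\<in>UNIV. \<Sum>x1\<in>UNIV. P t (x1,x2) * W1 x1 a * W2 x2 b / c)"
    unfolding jointG_def prodW_def sum_UNIV_prod' sum_divide_distrib by (simp add: mult.assoc)
  also have "\<dots> = jointG (\<lambda>t x2. (\<Sum>x1\<in>UNIV. P t (x1,x2) * W1 x1 a) / c) W2 t b"
    unfolding jointG_def sum_divide_distrib sum_distrib_right by (intro sum.cong refl) (simp add: field_simps)
  finally show ?thesis .
qed

lemma prod_step:
  fixes W1 :: "'x1::finite \<Rightarrow> 'y1 \<Rightarrow> real" and W2 :: "'x2::finite \<Rightarrow> 'y2 \<Rightarrow> real"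
    and V2 :: "'x2 \<Rightarrow> 'z2 \<Rightarrow> real" and P :: "nat \<Rightarrow> ('x1 \<times> 'x2) \<Rightarrow> real"
  assumes W1: "chanG W1" and W2: "chanG W2" and V2: "chanG V2" and ln: "lnG V2 W2" and P: "pmfG P"
  shows "mutual_info (jointG P (prodW W1 W2)) \<le> mutual_info (jointG P (prodW W1 V2))"
proof (rule chain_le[where S="suppT P" and A="suppW W1" and B="suppW W2" and B'="suppW V2"])
  show "finite (suppT P)" using P by (rule pmfG_fin)
  show "finite (suppW W1)" "finite (suppW W2)" "finite (suppW V2)" using W1 W2 V2 by (auto intro: chanG_fin)
  show "0 \<le> jointG P (prodW W1 W2) t y" for t y using P W1 W2 by (intro jointG_nn chanG_prodW)
  show "0 \<le> jointG P (prodW W1 V2) t y" for t y using P W1 V2 by (intro jointG_nn chanG_prodW)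
  show "jointG P (prodW W1 W2) t y \<noteq> 0 \<Longrightarrow> t \<in> suppT P \<and> y \<in> suppW W1 \<times> suppW W2" for t y
    by (rule jointG_prod_supp)
  show "jointG P (prodW W1 V2) t y \<noteq> 0 \<Longrightarrow> t \<in> suppT P \<and> y \<in> suppW W1 \<times> suppW V2" for t y
    by (rule jointG_prod_supp)
  show "(\<Sum>b\<in>suppW W2. jointG P (prodW W1 W2) t (a,b)) = (\<Sum>b\<in>suppW V2. jointG P (prodW W1 V2) t (a,b))" for t a
    unfolding marg_prod[OF W2] marg_prod[OF V2] ..
  fix a assume a: "a \<in> suppW W1"
  define QA where "QA = (\<Sum>t\<in>suppT P. \<Sum>b\<in>suppW W2. jointG P (prodW W1 W2) t (a,b))"
  assume pos: "QA > 0"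
  define P' where "P' = (\<lambda>t x2. (\<Sum>x1\<in>UNIV. P t (x1,x2) * W1 x1 a) / QA)"
  have QA': "QA = (\<Sum>t\<in>suppT P. \<Sum>x\<in>UNIV. P t x * W1 (fst x) a)"
    unfolding QA_def marg_prod[OF W2] ..
  have "pmfG P'"
  proof (rule pmfG_intro[where S="suppT P"])
    show "0 \<le> P' t x" for t x unfolding P'_def using pos P W1
      by (intro divide_nonneg_pos sum_nonneg mult_nonneg_nonneg) (auto intro: pmfG_nn chanG_nn)
    show "finite (suppT P)" using P by (rule pmfG_fin)
    show "P' t x \<noteq> 0 \<Longrightarrow> t \<in> suppT P" for t x
    proof -
      assume "P' t x \<noteq> 0"
      then have "(\<Sum>x1\<in>UNIV. P t (x1,x) * W1 x1 a) \<noteq> 0" unfolding P'_def by auto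
      then obtain x1 where "P t (x1,x) * W1 x1 a \<noteq> 0"
        using sum.not_neutral_contains_not_neutral by blast
      then have "P t (x1,x) \<noteq> 0" by auto
      then show ?thesis by (rule in_suppT)
    qed
    have "(\<Sum>t\<in>suppT P. \<Sum>x\<in>UNIV. P' t x) = (\<Sum>t\<in>suppT P. \<Sum>x\<in>UNIV. P t x * W1 (fst x) a) / QA"
      unfolding P'_def sum_UNIV_prod' by (simp add: sum_divide_distrib)
    then show "(\<Sum>t\<in>suppT P. \<Sum>x\<in>UNIV. P' t x) = 1" using pos QA' by simp
  qed
  then have "mutual_info (jointG P' W2) \<le> mutual_info (jointG P' V2)"
    using ln unfolding lnG_def by blast
  moreover have "(\<lambda>t b. jointG P (prodW W1 W2) t (a,b) / QA) = jointG P' W2"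
    unfolding P'_def by (intro ext cond_eq)
  moreover have "(\<lambda>t b. jointG P (prodW W1 V2) t (a,b) / QA) = jointG P' V2"
    unfolding P'_def by (intro ext cond_eq)
  ultimately show "mutual_info (\<lambda>t b. jointG P (prodW W1 W2) t (a,b) / QA) \<le>
     mutual_info (\<lambda>t b. jointG P (prodW W1 V2) t (a,b) / QA)" by simp
qed



lemma sum_swap_UNIV: "(\<Sum>x\<in>(UNIV::('a::finite \<times> 'b::finite) set). f x) = (\<Sum>x\<in>UNIV. f (prod.swap x))"
  unfolding sum_UNIV_prod prod.swap_def fst_conv snd_conv by (rule sum.swap)

lemma suppT_swap: "suppT (\<lambda>t x. P t (prod.swap x)) = suppT P"
  unfolding suppT_def by (metis swap_swap)

lemma jointG_swap:
  assumes P: "finite (suppT P)" and W1: "chanG W1" and W2: "chanG W2"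
  shows "mutual_info (jointG P (prodW W1 W2)) = mutual_info (jointG (\<lambda>t x. P t (prod.swap x)) (prodW W2 W1))"
proof (rule mi_relabel[where S="suppT P" and T="suppW W2 \<times> suppW W1" and f=id and g=prod.swap])
  show "finite (suppT P)" by (rule P)
  show "finite (suppW W2 \<times> suppW W1)" using W1 W2 by (auto intro: chanG_fin)
  show "jointG (\<lambda>t x. P t (prod.swap x)) (prodW W2 W1) a b \<noteq> 0 \<Longrightarrow> a \<in> suppT P \<and> b \<in> suppW W2 \<times> suppW W1" for a b
    using jointG_prod_supp[of "\<lambda>t x. P t (prod.swap x)" W2 W1 a b] suppT_swap[of P] by simp
  show "inj_on id (suppT P)" by simp
  show "inj_on prod.swap (suppW W2 \<times> suppW W1)" by (simp add: inj_on_def)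
  show "jointG P (prodW W1 W2) a b \<noteq> 0 \<Longrightarrow> a \<in> id ` suppT P \<and> b \<in> prod.swap ` (suppW W2 \<times> suppW W1)" for a b
    using jointG_prod_supp[of P W1 W2 a b] by (auto simp: image_iff)
  show "jointG P (prodW W1 W2) (id a) (prod.swap b) = jointG (\<lambda>t x. P t (prod.swap x)) (prodW W2 W1) a b" for a b
    unfolding jointG_def prodW_def by (subst sum_swap_UNIV) (simp add: mult_ac)
qed

lemma pmfG_swap: "pmfG P \<Longrightarrow> pmfG (\<lambda>t x. P t (prod.swap x))"
  unfolding pmfG_def suppT_swap by (simp add: sum_swap_UNIV[symmetric])

lemma prod_ln:
  fixes W1 :: "'x1::finite \<Rightarrow> 'y1 \<Rightarrow> real" and W2 :: "'x2::finite \<Rightarrow> 'y2 \<Rightarrow> real"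
    and V1 :: "'x1 \<Rightarrow> 'z1 \<Rightarrow> real" and V2 :: "'x2 \<Rightarrow> 'z2 \<Rightarrow> real"
  assumes W1: "chanG W1" and W2: "chanG W2" and V1: "chanG V1" and V2: "chanG V2"
    and l1: "lnG V1 W1" and l2: "lnG V2 W2"
  shows "lnG (prodW V1 V2) (prodW W1 W2)"
  unfolding lnG_def
proof (intro allI impI)
  fix P :: "nat \<Rightarrow> ('x1 \<times> 'x2) \<Rightarrow> real" assume P: "pmfG P"
  define Q where "Q = (\<lambda>t x. P t (prod.swap x))"
  have Q: "pmfG Q" unfolding Q_def using P by (rule pmfG_swap)
  have "mutual_info (jointG P (prodW W1 W2)) \<le> mutual_info (jointG P (prodW W1 V2))"
    by (rule prod_step[OF W1 W2 V2 l2 P])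
  also have "\<dots> = mutual_info (jointG Q (prodW V2 W1))"
    unfolding Q_def by (rule jointG_swap[OF pmfG_fin[OF P] W1 V2])
  also have "\<dots> \<le> mutual_info (jointG Q (prodW V2 V1))"
    by (rule prod_step[OF V2 W1 V1 l1 Q])
  also have "\<dots> = mutual_info (jointG (\<lambda>t x. Q t (prod.swap x)) (prodW V1 V2))"
    by (rule jointG_swap[OF pmfG_fin[OF Q] V2 V1])
  also have "(\<lambda>t x. Q t (prod.swap x)) = P" unfolding Q_def by simp
  finally show "mutual_info (jointG P (prodW W1 W2)) \<le> mutual_info (jointG P (prodW V1 V2))" .
qed

lemma chanG_relabel:
  assumes W1: "chanG W1" and g: "inj_on g (suppW W1)"
    and val: "\<And>x y. y \<in> suppW W1 \<Longrightarrow> W2 x (g y) = W1 x y"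
    and supp: "\<And>x y. W2 x y \<noteq> 0 \<Longrightarrow> y \<in> g ` suppW W1"
    and nn: "\<And>x y. 0 \<le> W2 x y"
  shows "chanG W2"
proof (rule chanG_intro[where Y="g ` suppW W1"])
  show "0 \<le> W2 x y" for x y by (rule nn)
  show "finite (g ` suppW W1)" using chanG_fin[OF W1] by simp
  show "W2 x y \<noteq> 0 \<Longrightarrow> y \<in> g ` suppW W1" for x y by (rule supp)
  show "(\<Sum>y\<in>g ` suppW W1. W2 x y) = 1" for x
    using chanG_sum'[OF W1, of x] val by (simp add: sum.reindex[OF g])
qed

lemma jointG_relabel:
  assumes P: "finite (suppT P)" and W1: "chanG W1" and g: "inj_on g (suppW W1)"
    and val: "\<And>x y. y \<in> suppW W1 \<Longrightarrow> W2 x (g y) = W1 x y"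
    and supp: "\<And>x y. W2 x y \<noteq> 0 \<Longrightarrow> y \<in> g ` suppW W1"
  shows "mutual_info (jointG P W2) = mutual_info (jointG P W1)"
proof (rule mi_relabel[where S="suppT P" and T="suppW W1" and f=id and g=g])
  show "finite (suppT P)" by (rule P)
  show "finite (suppW W1)" using W1 by (rule chanG_fin)
  show "jointG P W1 a b \<noteq> 0 \<Longrightarrow> a \<in> suppT P \<and> b \<in> suppW W1" for a b by (rule jointG_supp)
  show "inj_on id (suppT P)" by simp
  show "inj_on g (suppW W1)" by (rule g)
  show "jointG P W2 a b \<noteq> 0 \<Longrightarrow> a \<in> id ` suppT P \<and> b \<in> g ` suppW W1" for a b
  proof -
    assume "jointG P W2 a b \<noteq> 0"
    then have "a \<in> suppT P" "b \<in> suppW W2" using jointG_supp[of P W2 a b] by auto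
    then show ?thesis using supp unfolding suppW_def by auto
  qed
  show "jointG P W2 (id a) (g b) = jointG P W1 a b" if "b \<in> suppW W1" for a b
    unfolding jointG_def using val[OF that] by simp
qed



definition minusW :: "(bool \<Rightarrow> 'a \<Rightarrow> real) \<Rightarrow> bool \<Rightarrow> ('a \<times> 'a) \<Rightarrow> real" where
  "minusW W u1 y = (\<Sum>u2\<in>UNIV. 1/2 * W (u1 \<noteq> u2) (fst y) * W u2 (snd y))"

definition plusW :: "(bool \<Rightarrow> 'a \<Rightarrow> real) \<Rightarrow> bool \<Rightarrow> (bool \<times> ('a \<times> 'a)) \<Rightarrow> real" where
  "plusW W u2 y = 1/2 * W (fst y \<noteq> u2) (fst (snd y)) * W u2 (snd (snd y))"

definition P2 :: "(nat \<Rightarrow> bool \<Rightarrow> real) \<Rightarrow> nat \<Rightarrow> (bool \<times> bool) \<Rightarrow> real" where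
  "P2 P t x = 1/2 * P t (fst x \<noteq> snd x)"

definition Pp :: "(nat \<Rightarrow> bool \<Rightarrow> real) \<Rightarrow> bool \<Rightarrow> nat \<Rightarrow> (bool \<times> bool) \<Rightarrow> real" where
  "Pp P u1 t x = (if fst x = (u1 \<noteq> snd x) then P t (snd x) else 0)"

lemma prod_sum:
  fixes c :: real and f :: "'a \<Rightarrow> real" and g :: "'b \<Rightarrow> real"
  shows "(\<Sum>y\<in>A\<times>B. c * f (fst y) * g (snd y)) = c * sum f A * sum g B"
proof -
  have "(\<Sum>y\<in>A\<times>B. c * f (fst y) * g (snd y)) = (\<Sum>a\<in>A. \<Sum>b\<in>B. c * (f a * g b))"
    unfolding sum.cartesian_product by (intro sum.cong refl) (simp add: case_prod_beta mult.assoc)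
  also have "\<dots> = c * (sum f A * sum g B)"
    by (subst sum_product) (simp add: sum_distrib_left)
  finally show ?thesis by (simp add: mult.assoc)
qed

lemma minusW_supp: "minusW W u y \<noteq> 0 \<Longrightarrow> y \<in> suppW W \<times> suppW W"
proof -
  assume "minusW W u y \<noteq> 0"
  then obtain u2 where "1/2 * W (u \<noteq> u2) (fst y) * W u2 (snd y) \<noteq> 0"
    unfolding minusW_def using sum.not_neutral_contains_not_neutral by blast
  then have "W (u \<noteq> u2) (fst y) \<noteq> 0" "W u2 (snd y) \<noteq> 0" by auto
  then show ?thesis using in_suppW by (metis mem_Times_iff)
qed

lemma plusW_supp: "plusW W u y \<noteq> 0 \<Longrightarrow> y \<in> UNIV \<times> (suppW W \<times> suppW W)"
proof -
  assume "plusW W u y \<noteq> 0"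
  then have "W (fst y \<noteq> u) (fst (snd y)) \<noteq> 0" "W u (snd (snd y)) \<noteq> 0" unfolding plusW_def by auto
  then show ?thesis using in_suppW by (metis mem_Times_iff UNIV_I)
qed

lemma chanG_minusW: assumes W: "chanG W" shows "chanG (minusW W)"
proof (rule chanG_intro[where Y="suppW W \<times> suppW W"])
  show "0 \<le> minusW W x y" for x y unfolding minusW_def using W
    by (intro sum_nonneg) (auto intro: mult_nonneg_nonneg chanG_nn)
  show "finite (suppW W \<times> suppW W)" using chanG_fin[OF W] by simp
  show "minusW W x y \<noteq> 0 \<Longrightarrow> y \<in> suppW W \<times> suppW W" for x y by (rule minusW_supp)
  show "(\<Sum>y\<in>suppW W \<times> suppW W. minusW W x y) = 1" for x
  proof -
    have "(\<Sum>y\<in>suppW W \<times> suppW W. minusW W x y) =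
      (\<Sum>u2\<in>UNIV. \<Sum>y\<in>suppW W \<times> suppW W. 1/2 * W (x \<noteq> u2) (fst y) * W u2 (snd y))"
      unfolding minusW_def by (rule sum.swap)
    also have "\<dots> = (\<Sum>u2\<in>(UNIV::bool set). 1/2)"
      unfolding prod_sum chanG_sum'[OF W] by simp
    finally show ?thesis by simp
  qed
qed

lemma chanG_plusW: assumes W: "chanG W" shows "chanG (plusW W)"
proof (rule chanG_intro[where Y="(UNIV::bool set) \<times> (suppW W \<times> suppW W)"])
  show "0 \<le> plusW W x y" for x y unfolding plusW_def using W
    by (auto intro: mult_nonneg_nonneg chanG_nn)
  show "finite ((UNIV::bool set) \<times> (suppW W \<times> suppW W))" using chanG_fin[OF W] by (intro finite_cartesian_product) (auto simp: UNIV_bool)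
  show "plusW W x y \<noteq> 0 \<Longrightarrow> y \<in> (UNIV::bool set) \<times> (suppW W \<times> suppW W)" for x y by (rule plusW_supp)
  have "(\<Sum>y\<in>(UNIV::bool set) \<times> (suppW W \<times> suppW W). plusW W x y) =
      (\<Sum>u1\<in>UNIV. \<Sum>b\<in>suppW W \<times> suppW W. 1/2 * W (u1 \<noteq> x) (fst b) * W x (snd b))" for x
    unfolding plusW_def sum.cartesian_product by (intro sum.cong refl) (simp add: case_prod_beta)
  then show "(\<Sum>y\<in>(UNIV::bool set) \<times> (suppW W \<times> suppW W). plusW W x y) = 1" for x
    unfolding prod_sum chanG_sum'[OF W] by simp
qed

definition gm :: "('a outp \<times> 'a outp) \<Rightarrow> 'a outp" where "gm y = MinusOut (fst y) (snd y)"
definition gp :: "(bool \<times> ('a outp \<times> 'a outp)) \<Rightarrow> 'a outp" where "gp y = PlusOut (fst (snd y)) (snd (snd y)) (fst y)"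

lemma inj_gm: "inj_on gm A" unfolding inj_on_def gm_def by (auto simp: prod_eq_iff)
lemma inj_gp: "inj_on gp A" unfolding inj_on_def gp_def by (auto simp: prod_eq_iff)

lemma minus_gm: "minus_ch W x (gm y) = minusW W x y"
  unfolding minus_ch_def minusW_def gm_def by simp

lemma plus_gp: "plus_ch W x (gp y) = plusW W x y"
  unfolding plus_ch_def plusW_def gp_def by simp

lemma minus_supp: "minus_ch W x y \<noteq> 0 \<Longrightarrow> y \<in> gm ` suppW (minusW W)"
proof (cases y)
  case (MinusOut a b)
  assume "minus_ch W x y \<noteq> 0"
  then have "minusW W x (a,b) \<noteq> 0" using minus_gm[of W x "(a,b)"] MinusOut by (simp add: gm_def)
  then have "(a,b) \<in> suppW (minusW W)" by (rule in_suppW)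
  then show ?thesis using MinusOut unfolding gm_def by (intro image_eqI[where x="(a,b)"]) auto
qed (auto simp: minus_ch_def)

lemma plus_supp: "plus_ch W x y \<noteq> 0 \<Longrightarrow> y \<in> gp ` suppW (plusW W)"
proof (cases y)
  case (PlusOut a b u)
  assume "plus_ch W x y \<noteq> 0"
  then have "plusW W x (u,(a,b)) \<noteq> 0" using plus_gp[of W x "(u,(a,b))"] PlusOut by (simp add: gp_def)
  then have "(u,(a,b)) \<in> suppW (plusW W)" by (rule in_suppW)
  then show ?thesis using PlusOut unfolding gp_def by (intro image_eqI[where x="(u,(a,b))"]) auto
qed (auto simp: plus_ch_def)

lemma minus_nn: assumes "chanG W" shows "0 \<le> minus_ch W x y"
proof -
  have n: "\<And>a b. 0 \<le> W a b" using chanG_nn[OF assms] by blast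
  show ?thesis unfolding minus_ch_def
    by (cases y) (auto intro!: sum_nonneg mult_nonneg_nonneg n)
qed

lemma plus_nn: assumes "chanG W" shows "0 \<le> plus_ch W x y"
proof -
  have n: "\<And>a b. 0 \<le> W a b" using chanG_nn[OF assms] by blast
  show ?thesis unfolding plus_ch_def
    by (cases y) (auto intro!: mult_nonneg_nonneg n)
qed

lemma chanG_minus: "chanG W \<Longrightarrow> chanG (minus_ch W)"
  by (rule chanG_relabel[OF chanG_minusW inj_gm minus_gm minus_supp minus_nn])

lemma chanG_plus: "chanG W \<Longrightarrow> chanG (plus_ch W)"
  by (rule chanG_relabel[OF chanG_plusW inj_gp plus_gp plus_supp plus_nn])

lemma MI_minus: "pmfG P \<Longrightarrow> chanG W \<Longrightarrow> mutual_info (jointG P (minus_ch W)) = mutual_info (jointG P (minusW W))"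
  by (rule jointG_relabel[OF pmfG_fin chanG_minusW inj_gm minus_gm minus_supp])

lemma MI_plus: "pmfG P \<Longrightarrow> chanG W \<Longrightarrow> mutual_info (jointG P (plus_ch W)) = mutual_info (jointG P (plusW W))"
  by (rule jointG_relabel[OF pmfG_fin chanG_plusW inj_gp plus_gp plus_supp])

lemma minus_joint: "jointG P (minusW W) = jointG (P2 P) (prodW W W)"
  unfolding jointG_def minusW_def P2_def prodW_def
  by (intro ext) (simp add: sum_UNIV_prod sum_bool algebra_simps)

lemma pmfG_P2: assumes P: "pmfG P" shows "pmfG (P2 P)"
proof (rule pmfG_intro[where S="suppT P"])
  show "0 \<le> P2 P t x" for t x unfolding P2_def using pmfG_nn[OF P] by simp
  show "finite (suppT P)" using P by (rule pmfG_fin)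
  show "P2 P t x \<noteq> 0 \<Longrightarrow> t \<in> suppT P" for t x unfolding P2_def by (auto intro: in_suppT)
  have "(\<Sum>t\<in>suppT P. \<Sum>x\<in>UNIV. P2 P t x) = (\<Sum>t\<in>suppT P. \<Sum>x\<in>UNIV. P t x)"
    unfolding P2_def by (simp add: sum_UNIV_prod sum_bool add.commute)
  then show "(\<Sum>t\<in>suppT P. \<Sum>x\<in>UNIV. P2 P t x) = 1" using pmfG_sum[OF P pmfG_fin[OF P]] in_suppT by metis
qed

lemma minus_step:
  assumes W: "chanG W" and V: "chanG V" and l: "lnG V W"
  shows "lnG (minus_ch V) (minus_ch W)"
  unfolding lnG_def
proof (intro allI impI)
  fix P :: "nat \<Rightarrow> bool \<Rightarrow> real" assume P: "pmfG P"
  have "mutual_info (jointG P (minus_ch W)) = mutual_info (jointG (P2 P) (prodW W W))"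
    using MI_minus[OF P W] minus_joint by metis
  also have "\<dots> \<le> mutual_info (jointG (P2 P) (prodW V V))"
    using prod_ln[OF W W V V l l] pmfG_P2[OF P] unfolding lnG_def by blast
  also have "\<dots> = mutual_info (jointG P (minus_ch V))"
    using MI_minus[OF P V] minus_joint by metis
  finally show "mutual_info (jointG P (minus_ch W)) \<le> mutual_info (jointG P (minus_ch V))" .
qed



lemma plus_joint_supp:
  "jointG P (plusW W) t y \<noteq> 0 \<Longrightarrow> t \<in> suppT P \<and> y \<in> (UNIV::bool set) \<times> (suppW W \<times> suppW W)"
proof -
  assume "jointG P (plusW W) t y \<noteq> 0"
  then have "t \<in> suppT P" "y \<in> suppW (plusW W)" using jointG_supp[of P "plusW W" t y] by auto
  then show ?thesis using plusW_supp unfolding suppW_def by blast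
qed

lemma marg_plus:
  assumes W: "chanG W"
  shows "(\<Sum>b\<in>suppW W \<times> suppW W. jointG P (plusW W) t (u1,b)) = 1/2 * (\<Sum>x\<in>UNIV. P t x)"
proof -
  have "(\<Sum>b\<in>suppW W \<times> suppW W. jointG P (plusW W) t (u1,b)) =
      (\<Sum>x\<in>UNIV. P t x * (\<Sum>b\<in>suppW W \<times> suppW W. 1/2 * W (u1 \<noteq> x) (fst b) * W x (snd b)))"
    unfolding jointG_def plusW_def by (subst sum.swap) (simp add: sum_distrib_left)
  also have "\<dots> = (\<Sum>x\<in>UNIV. P t x * (1/2))"
    unfolding prod_sum chanG_sum'[OF W] by simp
  also have "\<dots> = 1/2 * (\<Sum>x\<in>UNIV. P t x)"
    by (simp add: sum_divide_distrib[symmetric])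
  finally show ?thesis .
qed

lemma plus_cond:
  "jointG P (plusW W) t (u1,b) / (1/2) = jointG (Pp P u1) (prodW W W) t b"
  unfolding jointG_def plusW_def Pp_def prodW_def
  by (cases u1) (simp_all add: sum_UNIV_prod sum_bool algebra_simps)

lemma pmfG_Pp: assumes P: "pmfG P" shows "pmfG (Pp P u1)"
proof (rule pmfG_intro[where S="suppT P"])
  show "0 \<le> Pp P u1 t x" for t x unfolding Pp_def using pmfG_nn[OF P] by simp
  show "finite (suppT P)" using P by (rule pmfG_fin)
  show "Pp P u1 t x \<noteq> 0 \<Longrightarrow> t \<in> suppT P" for t x unfolding Pp_def
    by (auto intro: in_suppT split: if_splits)
  have "(\<Sum>t\<in>suppT P. \<Sum>x\<in>UNIV. Pp P u1 t x) = (\<Sum>t\<in>suppT P. \<Sum>x\<in>UNIV. P t x)"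
    unfolding Pp_def by (cases u1) (simp_all add: sum_UNIV_prod sum_bool add.commute)
  then show "(\<Sum>t\<in>suppT P. \<Sum>x\<in>UNIV. Pp P u1 t x) = 1" using pmfG_sum[OF P pmfG_fin[OF P]] in_suppT by metis
qed

lemma plus_step:
  assumes W: "chanG W" and V: "chanG V" and l: "lnG V W"
  shows "lnG (plus_ch V) (plus_ch W)"
  unfolding lnG_def
proof (intro allI impI)
  fix P :: "nat \<Rightarrow> bool \<Rightarrow> real" assume P: "pmfG P"
  have "mutual_info (jointG P (plusW W)) \<le> mutual_info (jointG P (plusW V))"
  proof (rule chain_le[where S="suppT P" and A="UNIV::bool set" and B="suppW W \<times> suppW W" and B'="suppW V \<times> suppW V"])
    show "finite (suppT P)" using P by (rule pmfG_fin)
    show "finite (UNIV::bool set)" by simp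
    show "finite (suppW W \<times> suppW W)" "finite (suppW V \<times> suppW V)" using chanG_fin[OF W] chanG_fin[OF V] by auto
    show "0 \<le> jointG P (plusW W) t y" for t y using P chanG_plusW[OF W] by (rule jointG_nn)
    show "0 \<le> jointG P (plusW V) t y" for t y using P chanG_plusW[OF V] by (rule jointG_nn)
    show "jointG P (plusW W) t y \<noteq> 0 \<Longrightarrow> t \<in> suppT P \<and> y \<in> (UNIV::bool set) \<times> (suppW W \<times> suppW W)" for t y
      by (rule plus_joint_supp)
    show "jointG P (plusW V) t y \<noteq> 0 \<Longrightarrow> t \<in> suppT P \<and> y \<in> (UNIV::bool set) \<times> (suppW V \<times> suppW V)" for t y
      by (rule plus_joint_supp)
    show "(\<Sum>b\<in>suppW W \<times> suppW W. jointG P (plusW W) t (a,b)) = (\<Sum>b\<in>suppW V \<times> suppW V. jointG P (plusW V) t (a,b))" for t a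
      unfolding marg_plus[OF W] marg_plus[OF V] ..
    fix u1 :: bool
    have QA: "(\<Sum>t\<in>suppT P. \<Sum>b\<in>suppW W \<times> suppW W. jointG P (plusW W) t (u1,b)) = 1/2"
    proof -
      have s1: "(\<Sum>t\<in>suppT P. \<Sum>x\<in>UNIV. P t x) = 1" using pmfG_sum[OF P pmfG_fin[OF P]] in_suppT by metis
      show ?thesis unfolding marg_plus[OF W] sum_distrib_left[symmetric] s1 by simp
    qed
    have "mutual_info (jointG (Pp P u1) (prodW W W)) \<le> mutual_info (jointG (Pp P u1) (prodW V V))"
      using prod_ln[OF W W V V l l] pmfG_Pp[OF P] unfolding lnG_def by blast
    moreover have "(\<lambda>t b. jointG P (plusW W) t (u1,b) / (1/2)) = jointG (Pp P u1) (prodW W W)"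
      by (intro ext plus_cond)
    moreover have "(\<lambda>t b. jointG P (plusW V) t (u1,b) / (1/2)) = jointG (Pp P u1) (prodW V V)"
      by (intro ext plus_cond)
    ultimately show "mutual_info (\<lambda>t b. jointG P (plusW W) t (u1,b) / (\<Sum>t\<in>suppT P. \<Sum>b\<in>suppW W \<times> suppW W. jointG P (plusW W) t (u1,b))) \<le>
       mutual_info (\<lambda>t b. jointG P (plusW V) t (u1,b) / (\<Sum>t\<in>suppT P. \<Sum>b\<in>suppW W \<times> suppW W. jointG P (plusW W) t (u1,b)))"
      unfolding QA by simp
  qed
  then show "mutual_info (jointG P (plus_ch W)) \<le> mutual_info (jointG P (plus_ch V))"
    using MI_plus[OF P W] MI_plus[OF P V] by simp
qed

lemma lift_Base: "lift W x (Base b) = W x b" unfolding lift_def by simp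

lemma lift_supp: "lift W x y \<noteq> 0 \<Longrightarrow> y \<in> Base ` suppW W"
  unfolding lift_def by (cases y) (auto intro: in_suppW)

lemma lift_nn: assumes "chanG W" shows "0 \<le> lift W x y"
  unfolding lift_def using chanG_nn[OF assms] by (cases y) auto

lemma chanG_lift: "chanG W \<Longrightarrow> chanG (lift W)"
  by (rule chanG_relabel[where g=Base]) (auto simp: lift_Base lift_supp lift_nn inj_on_def)

lemma lift_ln:
  assumes W: "chanG W" and V: "chanG V" and l: "lnG V W"
  shows "lnG (lift V) (lift W)"
  unfolding lnG_def
proof (intro allI impI)
  fix P :: "nat \<Rightarrow> bool \<Rightarrow> real" assume P: "pmfG P"
  have "mutual_info (jointG P (lift W)) = mutual_info (jointG P W)"
    by (rule jointG_relabel[where g=Base, OF pmfG_fin[OF P] W]) (auto simp: lift_Base lift_supp inj_on_def)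
  also have "\<dots> \<le> mutual_info (jointG P V)" using l P unfolding lnG_def by blast
  also have "\<dots> = mutual_info (jointG P (lift V))"
    by (rule jointG_relabel[where g=Base, OF pmfG_fin[OF P] V, symmetric]) (auto simp: lift_Base lift_supp inj_on_def)
  finally show "mutual_info (jointG P (lift W)) \<le> mutual_info (jointG P (lift V))" .
qed

lemma polar_snoc: "polar (s @ [x]) W = transform x (polar s W)"
  unfolding polar_def by simp

lemma polar_all:
  assumes W: "chanG W" and V: "chanG V" and l: "lnG V W"
  shows "chanG (polar s (lift W)) \<and> chanG (polar s (lift V)) \<and> lnG (polar s (lift V)) (polar s (lift W))"
proof (induction s rule: rev_induct)
  case Nil
  then show ?case using chanG_lift[OF W] chanG_lift[OF V] lift_ln[OF W V l] by (simp add: polar_def)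
next
  case (snoc x xs)
  then show ?case
    by (cases x) (simp_all add: polar_snoc chanG_minus chanG_plus minus_step plus_step)
qed

lemma sym_le:
  fixes W :: "bool \<Rightarrow> 'y \<Rightarrow> real" and V :: "bool \<Rightarrow> 'z \<Rightarrow> real"
  assumes W: "chanG W" and V: "chanG V" and l: "lnG V W"
  shows "sym_capacity W \<le> sym_capacity V"
proof -
  define f :: "bool \<Rightarrow> nat" where "f = (\<lambda>x. if x then 1 else 0)"
  define P0 :: "nat \<Rightarrow> bool \<Rightarrow> real" where "P0 = (\<lambda>t x. if t = f x then 1/2 else 0)"
  have P0: "pmfG P0"
  proof (rule pmfG_intro[where S="{0,1}"])
    show "0 \<le> P0 t x" for t x unfolding P0_def by simp
    show "finite {0::nat,1}" by simp
    show "P0 t x \<noteq> 0 \<Longrightarrow> t \<in> {0,1}" for t x unfolding P0_def f_def by (auto split: if_splits)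
    show "(\<Sum>t\<in>{0::nat,1}. \<Sum>x\<in>UNIV. P0 t x) = 1" unfolding P0_def f_def by (simp add: sum_bool)
  qed
  have eq: "sym_capacity X = mutual_info (jointG P0 X)" if X: "chanG X" for X :: "bool \<Rightarrow> 'a \<Rightarrow> real"
    unfolding sym_capacity_def
  proof (rule mi_relabel[where S=UNIV and T="suppW X" and f=f and g=id, symmetric])
    show "finite (UNIV::bool set)" by simp
    show "finite (suppW X)" using X by (rule chanG_fin)
    show "1/2 * X a b \<noteq> 0 \<Longrightarrow> a \<in> UNIV \<and> b \<in> suppW X" for a b by (auto intro: in_suppW)
    show "inj_on f UNIV" unfolding f_def inj_on_def by auto
    show "inj_on id (suppW X)" by simp
    show "jointG P0 X a b \<noteq> 0 \<Longrightarrow> a \<in> f ` UNIV \<and> b \<in> id ` suppW X" for a b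
    proof -
      assume "jointG P0 X a b \<noteq> 0"
      then have "a \<in> suppT P0" "b \<in> suppW X" using jointG_supp[of P0 X a b] by auto
      then show ?thesis unfolding suppT_def P0_def by (auto split: if_splits)
    qed
    show "jointG P0 X (f a) (id b) = 1/2 * X a b" for a b
      unfolding jointG_def P0_def f_def by (cases a) (simp_all add: sum_bool)
  qed
  have "mutual_info (jointG P0 W) \<le> mutual_info (jointG P0 V)" using l P0 unfolding lnG_def by blast
  then show ?thesis using eq[OF W] eq[OF V] by simp
qed

theorem mainTheorem9:
  fixes W :: "bool \<Rightarrow> 'y \<Rightarrow> real" and V :: "bool \<Rightarrow> 'z \<Rightarrow> real"
    and n :: nat and s :: "sign list"
  assumes "channel W" and "channel V" and "less_noisy V W"
    and "n \<ge> 1" and "length s = n"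
  shows "less_noisy (polar s (lift V)) (polar s (lift W)) \<and>
         sym_capacity (polar s (lift W)) \<le> sym_capacity (polar s (lift V))"
proof -
  have W: "chanG W" and V: "chanG V" and l: "lnG V W"
    using assms(1-3) by (simp_all add: channel_chanG less_noisy_lnG)
  note h = polar_all[OF W V l, of s]
  then show ?thesis using sym_le[of "polar s (lift W)" "polar s (lift V)"] by (simp add: less_noisy_lnG)
qed


end
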